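(* Let $X\in\mathbb R^{n\times p}$ have unit $\ell_2$-norm columns and coherence $\mu$. Let $T_0\subset\{1,\dots,p\}$ with $|T_0|=s_0$, let $\lambda_1\ge\dots\ge\lambda_{s_0}$ be the $s_0$ largest eigenvalues of $X_{T_0}X_{T_0}^t$, and let $\tilde\lambda_1\ge\lambda_1$, $\tilde\lambda_{s_0}\le\lambda_{s_0}$. Let $T_1\subset\{1,\dots,p\}$ with $|T_1|=s_1=3s_0$ and $T_0\cap T_1=\emptyset$, and let $\eta=\tfrac12$. Set $$ \varepsilon_{\min}=\frac14\cdot\frac{s_0^3\mu^2/4+s_0^{3/2}\mu}{1-s_0\mu^2-\tfrac12},\qquad \varepsilon_{\max}=\frac14\cdot\frac{144\,s_0^4\mu^2+32\,s_0^{3/2}\mu(2-\eta)^2}{\tilde\lambda_1-1}. $$ Assume (1) $1-(s_0+s_1)\mu>\tilde\lambda_{s_0}>\eta$; (2) $1<\tilde\lambda_1<2-\eta$; (3) $s_1<\min\left(\frac{\tilde\lambda_{s_0}-\eta}{\varepsilon_{\min}},\frac{2-\eta-\tilde\lambda_1}{\varepsilon_{\max}}\right)$; and $$ \mu\le\min\left\{\frac{1}{\sqrt{288\,s_0^{5/2}(2s_0^{3/2}+1)}},\ \frac{1}{\sqrt{\tfrac32 s_0^4+6s_0^{5/2}+2s_0}}\right\}. $$ Then $$ \lambda_1\big(X_{T_0\cup T_1}^tX_{T_0\cup T_1}\big)\le\tilde\lambda_1+3s_0\varepsilon_{\max}\quad\text{and}\quad \lambda_{s_0+s_1}\big(X_{T_0\cup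 T_1}^tX_{T_0\cup T_1}\big)\ge\tilde\lambda_{s_0}-3s_0\varepsilon_{\min}. $$
   Context: $\mu=\max_{k<l}|\langle X_k,X_l\rangle|$ is the coherence of $X$, $X_T$ the submatrix with columns indexed by $T$, and $\lambda_k(A)$ the $k$-th largest eigenvalue of a symmetric matrix $A$. *)

theory Defs
  imports "Jordan_Normal_Form.Char_Poly" "Jordan_Normal_Form.DL_Submatrix"
begin

(* X_T : the submatrix of X consisting of the columns indexed by T (0-based indices) *)
definition cols_sub :: "real mat \<Rightarrow> nat set \<Rightarrow> real mat" where
  "cols_sub X T = submatrix X UNIV T"

definition coherence :: "real mat \<Rightarrow> real" where
  "coherence X = Max {\<bar>col X k \<bullet> col X l\<bar> | k l. k < l \<and> l < dim_col X}"

(* list of eigenvalues (with multiplicity) of a matrix whose characteristic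
   polynomial splits over the reals (e.g. a real symmetric matrix), sorted decreasingly *)
definition eigvals_desc :: "real mat \<Rightarrow> real list" where
  "eigvals_desc A = rev (sort (SOME es. char_poly A = (\<Prod>a\<leftarrow>es. [:- a, 1:])))"

(* lambda_k(A): the k-th largest eigenvalue, k \<ge> 1 *)
definition eig_k :: "nat \<Rightarrow> real mat \<Rightarrow> real" where
  "eig_k k A = eigvals_desc A ! (k - 1)"

end

theory Submission imports Defs begin

lemma sym_real_eig:
  fixes A :: "real mat" and a :: complex
  assumes A: "A \<in> carrier_mat m m"
    and sym: "\<And>i j. i < m \<Longrightarrow> j < m \<Longrightarrow> A $$ (i,j) = A $$ (j,i)"
    and root: "poly (char_poly (map_mat complex_of_real A)) a = 0"
  shows "Im a = 0"
proof -
  let ?B = "map_mat complex_of_real A"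
  have B: "?B \<in> carrier_mat m m" using A by simp
  from root eigenvalue_root_char_poly[OF B] obtain v where
    v: "v \<in> carrier_vec m" "v \<noteq> 0\<^sub>v m" "?B *\<^sub>v v = a \<cdot>\<^sub>v v"
    unfolding eigenvalue_def eigenvector_def using A by auto
  have key: "(\<Sum>j<m. complex_of_real (A$$(i,j)) * v$j) = a * v$i" if i: "i < m" for i
  proof -
    have "(?B *\<^sub>v v) $ i = (a \<cdot>\<^sub>v v) $ i" using v(3) by simp
    then show ?thesis using i A v(1)
      by (simp add: scalar_prod_def lessThan_atLeast0 mult.commute)
  qed
  define N where "N = (\<Sum>i<m. cmod (v$i)^2)"
  define s where "s = (\<Sum>i<m. \<Sum>j<m. cnj (v$i) * (complex_of_real (A$$(i,j)) * v$j))"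
  have s1: "s = a * of_real N"
  proof -
    have "s = (\<Sum>i<m. cnj (v$i) * (a * v$i))"
      unfolding s_def by (rule sum.cong, simp, simp add: sum_distrib_left[symmetric] key)
    also have "\<dots> = a * (\<Sum>i<m. of_real (cmod (v$i)^2))"
      unfolding sum_distrib_left
      by (rule sum.cong[OF refl]) (metis complex_norm_square mult.commute mult.left_commute)
    finally show ?thesis unfolding N_def by simp
  qed
  have s2: "cnj s = s"
  proof -
    have "cnj s = (\<Sum>i<m. \<Sum>j<m. v$i * (complex_of_real (A$$(i,j)) * cnj (v$j)))"
      unfolding s_def by (simp add: cnj_sum)
    also have "\<dots> = (\<Sum>j<m. \<Sum>i<m. v$i * (complex_of_real (A$$(i,j)) * cnj (v$j)))"
      by (rule sum.swap)
    also have "\<dots> = s" unfolding s_def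
      by (intro sum.cong refl, simp add: sym mult.commute mult.left_commute)
    finally show ?thesis .
  qed
  have "\<exists>i<m. v$i \<noteq> 0"
  proof (rule ccontr)
    assume "\<not> ?thesis"
    then have "v = 0\<^sub>v m" using v(1) by (intro eq_vecI) auto
    with v(2) show False by simp
  qed
  then obtain i where i: "i < m" "v$i \<noteq> 0" by blast
  have "N > 0" unfolding N_def
    by (rule sum_pos2[of _ i]) (use i in auto)
  have "Im s = 0" using arg_cong[OF s2, of Im] by simp
  with s1 \<open>N > 0\<close> show ?thesis by simp
qed

interpretation of_real_poly_hom: map_poly_comm_ring_hom "of_real :: real \<Rightarrow> complex" ..

lemma sym_split:
  fixes A :: "real mat"
  assumes A: "A \<in> carrier_mat m m"
    and sym: "\<And>i j. i < m \<Longrightarrow> j < m \<Longrightarrow> A $$ (i,j) = A $$ (j,i)"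
  shows "\<exists>es. char_poly A = (\<Prod>a\<leftarrow>es. [:- a, 1:])"
proof -
  let ?B = "map_mat complex_of_real A"
  have B: "?B \<in> carrier_mat m m" using A by simp
  obtain as where as: "char_poly ?B = (\<Prod>a\<leftarrow>as. [:- a, 1:])"
    using char_poly_factorized[OF B] by blast
  have re: "Im a = 0" if a: "a \<in> set as" for a
  proof (rule sym_real_eig[OF A sym])
    show "poly (char_poly ?B) a = 0" unfolding as using a
      by (induction as) auto
  qed
  define es where "es = map Re as"
  have ases: "as = map complex_of_real es" unfolding es_def
    by (rule nth_equalityI) (auto simp: re complex_eq_iff)
  have h: "char_poly ?B = map_poly complex_of_real (char_poly A)"
    by (rule of_real_hom.char_poly_hom[OF A])
  have h2: "map_poly complex_of_real (\<Prod>a\<leftarrow>es. [:- a, 1:]) = (\<Prod>a\<leftarrow>map complex_of_real es. [:- a, 1:])"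
    by (simp add: of_real_poly_hom.hom_prod_list o_def)
  have mp: "map_poly complex_of_real (char_poly A) = map_poly complex_of_real (\<Prod>a\<leftarrow>es. [:- a, 1:])"
    using h as ases h2 by simp
  then have "char_poly A = (\<Prod>a\<leftarrow>es. [:- a, 1:])"
  proof (intro poly_eqI)
    fix i
    from arg_cong[OF mp, of "\<lambda>p. coeff p i"]
    show "coeff (char_poly A) i = coeff (\<Prod>a\<leftarrow>es. [:- a, 1:]) i" by simp
  qed
  then show ?thesis by blast
qed

lemma gersh:
  fixes A :: "real mat" and r \<mu> :: real
  assumes A: "A \<in> carrier_mat m m"
    and diag: "\<And>i. i < m \<Longrightarrow> A $$ (i,i) = 1"
    and off: "\<And>i j. i < m \<Longrightarrow> j < m \<Longrightarrow> i \<noteq> j \<Longrightarrow> \<bar>A $$ (i,j)\<bar> \<le> \<mu>"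
    and root: "poly (char_poly A) r = 0"
  shows "\<bar>r - 1\<bar> \<le> real (m - 1) * \<mu>"
proof -
  from root eigenvalue_root_char_poly[OF A] obtain v where
    v: "v \<in> carrier_vec m" "v \<noteq> 0\<^sub>v m" "A *\<^sub>v v = r \<cdot>\<^sub>v v"
    unfolding eigenvalue_def eigenvector_def using A by auto
  have key: "(\<Sum>j<m. A$$(i,j) * v$j) = r * v$i" if i: "i < m" for i
  proof -
    have "(A *\<^sub>v v) $ i = (r \<cdot>\<^sub>v v) $ i" using v(3) by simp
    then show ?thesis using i A v(1)
      by (simp add: scalar_prod_def lessThan_atLeast0 mult.commute)
  qed
  have "\<exists>i<m. v$i \<noteq> 0"
  proof (rule ccontr)
    assume "\<not> ?thesis"
    then have "v = 0\<^sub>v m" using v(1) by (intro eq_vecI) auto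
    with v(2) show False by simp
  qed
  then obtain i0 where i0: "i0 < m" "v$i0 \<noteq> 0" by blast
  define M where "M = Max ((\<lambda>j. \<bar>v$j\<bar>) ` {..<m})"
  have Mge: "\<bar>v$j\<bar> \<le> M" if "j < m" for j unfolding M_def using that by (intro Max_ge) auto
  have "M \<in> (\<lambda>j. \<bar>v$j\<bar>) ` {..<m}" unfolding M_def using i0 by (intro Max_in) auto
  then obtain i where i: "i < m" "\<bar>v$i\<bar> = M" by auto
  have Mpos: "M > 0" using Mge[OF i0(1)] i0(2) by linarith
  have split: "(\<Sum>j<m. A$$(i,j) * v$j) = A$$(i,i) * v$i + (\<Sum>j\<in>{..<m}-{i}. A$$(i,j) * v$j)"
    using i by (simp add: sum.remove)
  have eq: "(r - 1) * v$i = (\<Sum>j\<in>{..<m}-{i}. A$$(i,j) * v$j)"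
    using key[OF i(1)] split diag[OF i(1)] by (simp add: algebra_simps)
  have "\<bar>(\<Sum>j\<in>{..<m}-{i}. A$$(i,j) * v$j)\<bar> \<le> (\<Sum>j\<in>{..<m}-{i}. \<bar>A$$(i,j) * v$j\<bar>)"
    by (rule sum_abs)
  also have "\<dots> \<le> (\<Sum>j\<in>{..<m}-{i}. \<mu> * M)"
  proof (rule sum_mono)
    fix j assume j: "j \<in> {..<m}-{i}"
    then have "\<bar>A$$(i,j)\<bar> \<le> \<mu>" using off[OF i(1)] by auto
    moreover have "\<bar>v$j\<bar> \<le> M" using j Mge by auto
    ultimately show "\<bar>A$$(i,j) * v$j\<bar> \<le> \<mu> * M"
      by (simp add: abs_mult mult_mono')
  qed
  also have "\<dots> = real (m - 1) * (\<mu> * M)" using i by simp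
  finally have le: "\<bar>(r - 1) * v$i\<bar> \<le> real (m - 1) * (\<mu> * M)"
    unfolding eq .
  have "\<bar>r - 1\<bar> * M \<le> real (m - 1) * \<mu> * M"
    using le i(2) by (simp add: abs_mult mult.assoc)
  then show ?thesis using Mpos by simp
qed


theorem mainTheorem5:
  fixes X :: "real mat" and n p s0 s1 :: nat and T0 T1 :: "nat set"
    and lt1 lts0 \<eta> \<epsilon>min \<epsilon>max \<mu> :: real
  assumes X_dim: "X \<in> carrier_mat n p"
    and unit_cols: "\<And>j. j < p \<Longrightarrow> col X j \<bullet> col X j = 1"
    and mu_def: "\<mu> = coherence X"
    and T0: "T0 \<subseteq> {0..<p}" "card T0 = s0" "s0 \<ge> 1"
    and lt1: "lt1 \<ge> eig_k 1 (cols_sub X T0 * (cols_sub X T0)\<^sup>T)"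
    and lts0: "lts0 \<le> eig_k s0 (cols_sub X T0 * (cols_sub X T0)\<^sup>T)"
    and T1: "T1 \<subseteq> {0..<p}" "card T1 = s1" "s1 = 3 * s0" "T0 \<inter> T1 = {}"
    and eta: "\<eta> = 1/2"
    and emin: "\<epsilon>min = 1/4 * ((real s0 ^ 3 * \<mu>^2 / 4 + real s0 powr (3/2) * \<mu>)
                              / (1 - real s0 * \<mu>^2 - 1/2))"
    and emax: "\<epsilon>max = 1/4 * ((144 * real s0 ^ 4 * \<mu>^2
                              + 32 * real s0 powr (3/2) * \<mu> * (2 - \<eta>)^2) / (lt1 - 1))"
    and c1: "1 - real (s0 + s1) * \<mu> > lts0" "lts0 > \<eta>"
    and c2: "1 < lt1" "lt1 < 2 - \<eta>"
    and c3: "real s1 < min ((lts0 - \<eta>) / \<epsilon>min) ((2 - \<eta> - lt1) / \<epsilon>max)"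
    and c4: "\<mu> \<le> min (1 / sqrt (288 * real s0 powr (5/2) * (2 * real s0 powr (3/2) + 1)))
                       (1 / sqrt (3/2 * real s0 ^ 4 + 6 * real s0 powr (5/2) + 2 * real s0))"
  shows "eig_k 1 ((cols_sub X (T0 \<union> T1))\<^sup>T * cols_sub X (T0 \<union> T1)) \<le> lt1 + 3 * real s0 * \<epsilon>max
       \<and> eig_k (s0 + s1) ((cols_sub X (T0 \<union> T1))\<^sup>T * cols_sub X (T0 \<union> T1)) \<ge> lts0 - 3 * real s0 * \<epsilon>min"
  proof -
  define T where "T = T0 \<union> T1"
  define Y where "Y = cols_sub X T"
  define G where "G = Y\<^sup>T * Y"
  define m where "m = card T"
  have Tsub: "T \<subseteq> {0..<p}" using T0(1) T1(1) unfolding T_def by auto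
  have fin: "finite T" using Tsub finite_subset by blast
  have m4: "m = 4 * s0" unfolding m_def T_def
    using T0 T1 fin unfolding T_def by (simp add: card_Un_disjoint)
  have setT: "{j. j < dim_col X \<and> j \<in> T} = T" using Tsub X_dim by auto
  have setR: "{i. i < dim_row X \<and> i \<in> UNIV} = {..<n}" using X_dim by auto
  have dimY: "dim_row Y = n" "dim_col Y = m"
    unfolding Y_def cols_sub_def dim_submatrix setT setR m_def by simp_all
  have pickT: "pick T j \<in> T" if "j < m" for j using that pick_in_set unfolding m_def by blast
  have pickp: "pick T j < p" if "j < m" for j using pickT[OF that] Tsub by auto
  have pickinj: "pick T i \<noteq> pick T j" if "i < m" "j < m" "i \<noteq> j" for i j
  proof (cases "i < j")
    case True then show ?thesis using pick_mono[of j T i] that unfolding m_def by auto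
  next
    case False then have "j < i" using that by simp
    then show ?thesis using pick_mono[of i T j] that unfolding m_def by auto
  qed
  have colY: "col Y j = col X (pick T j)" if j: "j < m" for j
  proof (rule eq_vecI)
    show "dim_vec (col Y j) = dim_vec (col X (pick T j))" using dimY X_dim by simp
    fix k assume "k < dim_vec (col X (pick T j))"
    then have k: "k < n" using X_dim by simp
    have "col Y j $ k = Y $$ (k, j)" using k j dimY by simp
    also have "\<dots> = X $$ (pick UNIV k, pick T j)" unfolding Y_def cols_sub_def
      by (rule submatrix_index) (use k j setT setR m_def in auto)
    also have "\<dots> = col X (pick T j) $ k" using k pickp[OF j] X_dim by (simp add: pick_UNIV)
    finally show "col Y j $ k = col X (pick T j) $ k" .
  qed
  have G: "G \<in> carrier_mat m m" unfolding G_def using dimY by auto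
  have Gij: "G $$ (i,j) = col X (pick T i) \<bullet> col X (pick T j)" if "i < m" "j < m" for i j
    unfolding G_def using that dimY colY by simp
  have colc: "col X j \<in> carrier_vec n" for j using X_dim unfolding carrier_vec_def by simp
  define S where "S = {\<bar>col X k \<bullet> col X l\<bar> | k l. k < l \<and> l < dim_col X}"
  have finS: "finite S"
  proof -
    have "S \<subseteq> (\<lambda>(k,l). \<bar>col X k \<bullet> col X l\<bar>) ` ({..<p} \<times> {..<p})"
      unfolding S_def using X_dim by auto
    then show ?thesis by (rule finite_subset) auto
  qed
  have muS: "\<mu> = Max S" unfolding mu_def coherence_def S_def ..
  have coh: "\<bar>col X a \<bullet> col X b\<bar> \<le> \<mu>" if "a < p" "b < p" "a \<noteq> b" for a b
  proof (cases "a < b")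
    case True
    then have "\<bar>col X a \<bullet> col X b\<bar> \<in> S" unfolding S_def using that X_dim by auto
    then show ?thesis unfolding muS using finS by simp
  next
    case False
    then have "b < a" using that by simp
    then have "\<bar>col X b \<bullet> col X a\<bar> \<in> S" unfolding S_def using that X_dim by blast
    then show ?thesis unfolding muS using finS comm_scalar_prod[OF colc colc] by simp
  qed
  have diag: "G $$ (i,i) = 1" if "i < m" for i using Gij[OF that that] unit_cols pickp[OF that] by simp
  have off: "\<bar>G $$ (i,j)\<bar> \<le> \<mu>" if "i < m" "j < m" "i \<noteq> j" for i j
    using Gij[OF that(1,2)] coh[OF pickp[OF that(1)] pickp[OF that(2)] pickinj[OF that]] by simp
  have sym: "G $$ (i,j) = G $$ (j,i)" if "i < m" "j < m" for i j
    using Gij[OF that] Gij[OF that(2,1)] comm_scalar_prod[OF colc colc] by simp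
  have m1: "0 < m" "1 < m" using m4 T0(3) by linarith+
  have mu0: "\<mu> \<ge> 0" using off[OF m1] by simp
  obtain es0 where "char_poly G = (\<Prod>a\<leftarrow>es0. [:- a, 1:])" using sym_split[OF G sym] by blast
  define es where "es = (SOME es. char_poly G = (\<Prod>a\<leftarrow>es. [:- a, 1:]))"
  have es: "char_poly G = (\<Prod>a\<leftarrow>es. [:- a, 1:])"
    unfolding es_def by (rule someI, fact)
  have len: "length es = m"
    using degree_monic_char_poly[OF G] degree_linear_factors[of uminus es] es by simp
  have root: "poly (char_poly G) x = 0" if "x \<in> set es" for x
    unfolding es using that by (induction es) auto
  have bnd: "\<bar>x - 1\<bar> \<le> real (m - 1) * \<mu>" if "x \<in> set es" for x
    by (rule gersh[OF G diag off root[OF that]])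
  have ev: "eigvals_desc G = rev (sort es)" unfolding eigvals_desc_def es_def ..
  have L: "length (rev (sort es)) = m" using len by simp
  have setL: "set (rev (sort es)) = set es" by simp
  have e1: "eig_k 1 G \<in> set es"
  proof -
    have "rev (sort es) ! 0 \<in> set (rev (sort es))" using L m1 by (intro nth_mem) simp
    then show ?thesis unfolding eig_k_def ev setL by simp
  qed
  have e2: "eig_k (s0 + s1) G \<in> set es"
  proof -
    have idx: "s0 + s1 - 1 < m" using m4 T1(3) T0(3) by simp
    have "rev (sort es) ! (s0 + s1 - 1) \<in> set (rev (sort es))" using L idx by (intro nth_mem) simp
    then show ?thesis unfolding eig_k_def ev setL by simp
  qed
  have rm: "real (m - 1) = 4 * real s0 - 1" using m4 T0(3) by simp
  have b1: "eig_k 1 G \<le> 1 + (4 * real s0 - 1) * \<mu>" using bnd[OF e1] rm by simp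
  have b2: "eig_k (s0 + s1) G \<ge> 1 - (4 * real s0 - 1) * \<mu>" using bnd[OF e2] rm by simp
  have s0r: "real s0 \<ge> 1" using T0(3) by simp
  have p32: "real s0 powr (3/2) \<ge> 1" using s0r by (simp add: ge_one_powr_ge_zero)
  have Nge: "144 * real s0 ^ 4 * \<mu>^2 + 32 * real s0 powr (3/2) * \<mu> * (2 - \<eta>)^2 \<ge> 72 * \<mu>"
  proof -
    have "32 * real s0 powr (3/2) * \<mu> * (2 - \<eta>)^2 = 72 * (real s0 powr (3/2) * \<mu>)"
    proof -
      have "(2 - \<eta>)^2 = 9/4" unfolding eta by (simp add: power2_eq_square)
      then show ?thesis by simp
    qed
    moreover have "real s0 powr (3/2) * \<mu> \<ge> \<mu>" using p32 mu0 by (simp add: mult_le_cancel_right1)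
    moreover have "144 * real s0 ^ 4 * \<mu>^2 \<ge> 0" by simp
    ultimately show ?thesis by linarith
  qed
  have l1: "0 < lt1 - 1" "lt1 - 1 < 1" using c2 eta by auto
  have "72 * \<mu> \<le> 72 * \<mu> / (lt1 - 1)" using l1 mu0 by (simp add: le_divide_eq mult_left_le)
  also have "\<dots> \<le> (144 * real s0 ^ 4 * \<mu>^2 + 32 * real s0 powr (3/2) * \<mu> * (2 - \<eta>)^2) / (lt1 - 1)"
    using Nge l1 by (simp add: divide_right_mono)
  finally have "72 * \<mu> \<le> (144 * real s0 ^ 4 * \<mu>^2 + 32 * real s0 powr (3/2) * \<mu> * (2 - \<eta>)^2) / (lt1 - 1)" .
  moreover have gen: "\<And>Q::real. 72*\<mu> \<le> Q \<Longrightarrow> 18*\<mu> \<le> 1/4 * Q" by linarith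
  ultimately have emx: "\<epsilon>max \<ge> 18 * \<mu>" unfolding emax by blast
  have up: "1 + (4 * real s0 - 1) * \<mu> \<le> lt1 + 3 * real s0 * \<epsilon>max"
  proof -
    have "3 * real s0 * \<epsilon>max \<ge> 3 * real s0 * (18 * \<mu>)" using emx s0r by simp
    moreover have "(4 * real s0 - 1) * \<mu> \<le> 54 * real s0 * \<mu>" using mu0 s0r by (simp add: mult_right_mono)
    ultimately show ?thesis using l1 by linarith
  qed
  have emn: "\<epsilon>min > 0"
  proof (rule ccontr)
    assume "\<not> \<epsilon>min > 0"
    then have "(lts0 - \<eta>) / \<epsilon>min \<le> 0" using c1(2) by (simp add: divide_nonneg_nonpos)
    moreover have "real s1 \<ge> 0" by simp
    ultimately show False using c3 by linarith
  qed
  have lo: "lts0 - 3 * real s0 * \<epsilon>min \<le> 1 - (4 * real s0 - 1) * \<mu>"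
  proof -
    have "lts0 < 1 - 4 * real s0 * \<mu>" using c1(1) T1(3) by (simp add: algebra_simps)
    moreover have "3 * real s0 * \<epsilon>min \<ge> 0" using emn by simp
    ultimately show ?thesis using mu0 by (simp add: algebra_simps)
  qed
  show ?thesis unfolding G_def[symmetric] Y_def[symmetric] T_def[symmetric]
    using b1 b2 up lo by linarith
qed

end
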